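(* Let $G$ be a finite connected interval graph that is balanced and $p$-critical (for some $p\ge1$), and let $z$ be the basepoint of $G$. (a) If there is at most one exterior local component at $z$, then there are at least two local components at $z$ which are cliques and have maximum order among the local components at $z$. (b) If there is no exterior local component at $z$, then there are at least three local components at $z$ which are cliques and have maximum order among the local components at $z$.
   Context: An interval graph is a finite simple graph whose vertices can be assigned (closed, bounded) real intervals $I_v$ so that $v,w$ are adjacent iff $I_v\cap I_w\ne\emptyset$. For such a representation $\alpha$, $\mathrm{imp}_\alpha(z)$ is the number of intervals $I_w$, $w\ne z$, with $I_w\subseteq I_z$; $\mathrm{imp}(\alpha)=\max_z\mathrm{imp}_\alpha(z)$; and the impropriety $\mathrm{imp}(G)$ is the minimum of $\mathrm{imp}(\alpha)$ over all representations. A local component at $z$ is a connected component of $G\setminus\{z\}$; it is exterior iff it contains a vertex not adjacent to $z$. If $z$ has $n$ local components, $\mathrm{wt}(z)$ is the sum of the $n-2$ smallest orders among the non-exterior local components at $z$ ($0$ if $n\le2$), and $\mathrm{wt}(G)=\max_z \mathrm{wt}(z)$. $G$ is balanced iff $\mathrm{wt}(G)=\mathrm{imp}(G)$. If $G$ is balanced, a basepoint of $G$ is a vertex $z$ with $\mathrm{wt}(z)=\mathrm{imp}(G)$ (a balanced $p$-critical graph has exactly one basepoint). For $p>0$, $G$ is $p$-critical iff $\mathrm{imp}(G)=p$ and every proper induced subgraph of $G$ has impropriety strictly less than $p$. *)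

theory Defs
  imports Complex_Main "HOL-Library.Multiset"
begin

text \<open>A finite simple graph is given by a vertex set V and a symmetric,
irreflexive adjacency relation E; only the restriction of E to V matters.
The induced subgraph on S \<subseteq> V is (S, E).\<close>

definition simple_graph :: "'a set \<Rightarrow> ('a \<Rightarrow> 'a \<Rightarrow> bool) \<Rightarrow> bool" where
  "simple_graph V E \<longleftrightarrow> finite V \<and>
     (\<forall>u\<in>V. \<forall>v\<in>V. E u v \<longleftrightarrow> E v u) \<and> (\<forall>v\<in>V. \<not> E v v)"

definition interval_rep :: "'a set \<Rightarrow> ('a \<Rightarrow> 'a \<Rightarrow> bool) \<Rightarrow> ('a \<Rightarrow> real) \<Rightarrow> ('a \<Rightarrow> real) \<Rightarrow> bool" where
  "interval_rep V E lo hi \<longleftrightarrow> (\<forall>v\<in>V. lo v \<le> hi v) \<and>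
     (\<forall>v\<in>V. \<forall>w\<in>V. v \<noteq> w \<longrightarrow> (E v w \<longleftrightarrow> {lo v..hi v} \<inter> {lo w..hi w} \<noteq> {}))"

definition interval_graph :: "'a set \<Rightarrow> ('a \<Rightarrow> 'a \<Rightarrow> bool) \<Rightarrow> bool" where
  "interval_graph V E \<longleftrightarrow> simple_graph V E \<and> (\<exists>lo hi. interval_rep V E lo hi)"

definition imp_at :: "'a set \<Rightarrow> ('a \<Rightarrow> real) \<Rightarrow> ('a \<Rightarrow> real) \<Rightarrow> 'a \<Rightarrow> nat" where
  "imp_at V lo hi z = card {w \<in> V - {z}. {lo w..hi w} \<subseteq> {lo z..hi z}}"

definition imp_rep :: "'a set \<Rightarrow> ('a \<Rightarrow> real) \<Rightarrow> ('a \<Rightarrow> real) \<Rightarrow> nat" where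
  "imp_rep V lo hi = Max (insert 0 (imp_at V lo hi ` V))"

definition impropriety :: "'a set \<Rightarrow> ('a \<Rightarrow> 'a \<Rightarrow> bool) \<Rightarrow> nat" where
  "impropriety V E = Inf {imp_rep V lo hi | lo hi. interval_rep V E lo hi}"

definition reach :: "'a set \<Rightarrow> ('a \<Rightarrow> 'a \<Rightarrow> bool) \<Rightarrow> 'a \<Rightarrow> 'a \<Rightarrow> bool" where
  "reach S E = (\<lambda>x y. E x y \<and> x \<in> S \<and> y \<in> S)\<^sup>*\<^sup>*"

definition connected_graph :: "'a set \<Rightarrow> ('a \<Rightarrow> 'a \<Rightarrow> bool) \<Rightarrow> bool" where
  "connected_graph V E \<longleftrightarrow> V \<noteq> {} \<and> (\<forall>u\<in>V. \<forall>v\<in>V. reach V E u v)"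

definition components :: "'a set \<Rightarrow> ('a \<Rightarrow> 'a \<Rightarrow> bool) \<Rightarrow> 'a set set" where
  "components S E = {{w \<in> S. reach S E v w} | v. v \<in> S}"

definition local_components :: "'a set \<Rightarrow> ('a \<Rightarrow> 'a \<Rightarrow> bool) \<Rightarrow> 'a \<Rightarrow> 'a set set" where
  "local_components V E z = components (V - {z}) E"

definition exterior :: "('a \<Rightarrow> 'a \<Rightarrow> bool) \<Rightarrow> 'a \<Rightarrow> 'a set \<Rightarrow> bool" where
  "exterior E z C \<longleftrightarrow> (\<exists>w\<in>C. \<not> E z w)"

text \<open>wt(z): sum of the n-2 smallest orders among the non-exterior local components
  (n = number of local components); 0 if n \<le> 2.\<close>
definition wt_at :: "'a set \<Rightarrow> ('a \<Rightarrow> 'a \<Rightarrow> bool) \<Rightarrow> 'a \<Rightarrow> nat" where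
  "wt_at V E z =
    (let LC = local_components V E z;
         n = card LC;
         NE = {C \<in> LC. \<not> exterior E z C}
     in sum_list (take (n - 2) (sorted_list_of_multiset (image_mset card (mset_set NE)))))"

definition wt :: "'a set \<Rightarrow> ('a \<Rightarrow> 'a \<Rightarrow> bool) \<Rightarrow> nat" where
  "wt V E = Max (insert 0 (wt_at V E ` V))"

definition balanced :: "'a set \<Rightarrow> ('a \<Rightarrow> 'a \<Rightarrow> bool) \<Rightarrow> bool" where
  "balanced V E \<longleftrightarrow> wt V E = impropriety V E"

definition basepoint :: "'a set \<Rightarrow> ('a \<Rightarrow> 'a \<Rightarrow> bool) \<Rightarrow> 'a \<Rightarrow> bool" where
  "basepoint V E z \<longleftrightarrow> balanced V E \<and> z \<in> V \<and> wt_at V E z = impropriety V E"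

definition critical :: "nat \<Rightarrow> 'a set \<Rightarrow> ('a \<Rightarrow> 'a \<Rightarrow> bool) \<Rightarrow> bool" where
  "critical p V E \<longleftrightarrow> p > 0 \<and> impropriety V E = p \<and>
     (\<forall>S. S \<subset> V \<longrightarrow> impropriety S E < p)"

definition is_clique :: "('a \<Rightarrow> 'a \<Rightarrow> bool) \<Rightarrow> 'a set \<Rightarrow> bool" where
  "is_clique E C \<longleftrightarrow> (\<forall>x\<in>C. \<forall>y\<in>C. x \<noteq> y \<longrightarrow> E x y)"

definition max_clique_components :: "'a set \<Rightarrow> ('a \<Rightarrow> 'a \<Rightarrow> bool) \<Rightarrow> 'a \<Rightarrow> 'a set set" where
  "max_clique_components V E z =
     {C \<in> local_components V E z. is_clique E C \<and>
        card C = Max (card ` local_components V E z)}"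

end

theory Submission
  imports Defs
begin


lemma reach_edge: "E x y \<Longrightarrow> x \<in> S \<Longrightarrow> y \<in> S \<Longrightarrow> reach S E x y"
  unfolding reach_def by (rule r_into_rtranclp) simp

lemma reach_trans: "reach S E x y \<Longrightarrow> reach S E y w \<Longrightarrow> reach S E x w"
  unfolding reach_def by (rule rtranclp_trans)

lemma reach_mono: "reach S E x y \<Longrightarrow> S \<subseteq> T \<Longrightarrow> reach T E x y"
  unfolding reach_def
  by (induction rule: rtranclp_induct) (auto intro: rtranclp.rtrancl_into_rtrancl)

definition symE :: "'a set \<Rightarrow> ('a \<Rightarrow> 'a \<Rightarrow> bool) \<Rightarrow> bool" where
  "symE S E \<longleftrightarrow> (\<forall>u\<in>S. \<forall>v\<in>S. E u v \<longrightarrow> E v u)"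

lemma reach_sym:
  assumes "symE S E"
  shows "reach S E x y \<Longrightarrow> reach S E y x"
  unfolding reach_def
proof (induction rule: rtranclp_induct)
  case base then show ?case by simp
next
  case (step y w)
  then have "E w y" "w \<in> S" "y \<in> S" using assms unfolding symE_def by auto
  then show ?case using step.IH by (rule_tac converse_rtranclp_into_rtranclp) auto
qed

lemma reach_exit:
  "reach S E a b \<Longrightarrow> a \<in> T \<Longrightarrow> b \<notin> T \<Longrightarrow>
   \<exists>c d. reach (S \<inter> T) E a c \<and> c \<in> S \<inter> T \<and> E c d \<and> d \<in> S \<and> d \<notin> T"
  unfolding reach_def
proof (induction rule: converse_rtranclp_induct)
  case base then show ?case by simp
next
  case (step a a')
  show ?case
  proof (cases "a' \<in> T")
    case True
    then obtain c d where cd: "(\<lambda>x y. E x y \<and> x \<in> S \<inter> T \<and> y \<in> S \<inter> T)\<^sup>*\<^sup>* a' c"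
      "c \<in> S \<inter> T" "E c d" "d \<in> S" "d \<notin> T" using step by blast
    have "(\<lambda>x y. E x y \<and> x \<in> S \<inter> T \<and> y \<in> S \<inter> T)\<^sup>*\<^sup>* a c"
      using cd(1) step True by (auto intro: converse_rtranclp_into_rtranclp)
    then show ?thesis using cd by blast
  next
    case False then show ?thesis using step by blast
  qed
qed

definition compo :: "'a set \<Rightarrow> ('a \<Rightarrow> 'a \<Rightarrow> bool) \<Rightarrow> 'a \<Rightarrow> 'a set" where
  "compo S E u = {w\<in>S. reach S E u w}"

lemma components_eq: "components S E = compo S E ` S"
  unfolding components_def compo_def by auto

lemma comp_sub: "C \<in> components S E \<Longrightarrow> C \<subseteq> S"
  unfolding components_eq compo_def by auto

lemma comp_ne: "C \<in> components S E \<Longrightarrow> C \<noteq> {}"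
  unfolding components_eq compo_def reach_def by auto

lemma comp_finite: "finite S \<Longrightarrow> finite (components S E)"
  unfolding components_eq by simp

lemma comp_closed: "C \<in> components S E \<Longrightarrow> x \<in> C \<Longrightarrow> y \<in> S \<Longrightarrow> E x y \<Longrightarrow> y \<in> C"
  unfolding components_eq compo_def
proof clarify
  fix u assume "u \<in> S" "x \<in> S" "reach S E u x" "y \<in> S" "E x y"
  then show "reach S E u y" using reach_edge[of E x y S] reach_trans[of S E u x y] by blast
qed

lemma compo_same: "symE S E \<Longrightarrow> x \<in> compo S E u \<Longrightarrow> compo S E x = compo S E u"
proof -
  assume s: "symE S E" and x: "x \<in> compo S E u"
  then have ux: "reach S E u x" and xu: "reach S E x u" unfolding compo_def using reach_sym[OF s] by auto
  show ?thesis unfolding compo_def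
  proof (intro Collect_cong conj_cong refl iffI)
    fix w assume "reach S E x w" then show "reach S E u w" using reach_trans[OF ux] by blast
  next
    fix w assume "reach S E u w" then show "reach S E x w" using reach_trans[OF xu] by blast
  qed
qed

lemma comp_disj: "symE S E \<Longrightarrow> C \<in> components S E \<Longrightarrow> C' \<in> components S E \<Longrightarrow>
   x \<in> C \<Longrightarrow> x \<in> C' \<Longrightarrow> C = C'"
proof -
  assume s: "symE S E" and C: "C \<in> components S E" and C': "C' \<in> components S E"
    and x: "x \<in> C" "x \<in> C'"
  obtain u where u: "C = compo S E u" using C unfolding components_eq by blast
  obtain u' where u': "C' = compo S E u'" using C' unfolding components_eq by blast
  have "compo S E x = C" using compo_same[OF s, of x u] x u by simp
  moreover have "compo S E x = C'" using compo_same[OF s, of x u'] x u' by simp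
  ultimately show ?thesis by simp
qed

lemma comp_noedge: "symE S E \<Longrightarrow> C \<in> components S E \<Longrightarrow> C' \<in> components S E \<Longrightarrow>
   C \<noteq> C' \<Longrightarrow> x \<in> C \<Longrightarrow> y \<in> C' \<Longrightarrow> E x y \<Longrightarrow> False"
proof -
  assume s: "symE S E" and C: "C \<in> components S E" and C': "C' \<in> components S E"
    and ne: "C \<noteq> C'" and x: "x \<in> C" and y: "y \<in> C'" and e: "E x y"
  have "y \<in> S" using comp_sub[OF C'] y by blast
  then have "y \<in> C" using comp_closed[OF C x _ e] by blast
  then show False using comp_disj[OF s C C' _ y] ne by blast
qed

lemma ivl_meet: "(a::real) \<le> b \<Longrightarrow> c \<le> d \<Longrightarrow> ({a..b} \<inter> {c..d} \<noteq> {}) = (a \<le> d \<and> c \<le> b)"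
proof
  assume "{a..b} \<inter> {c..d} \<noteq> {}"
  then obtain t where "t \<in> {a..b} \<inter> {c..d}" by blast
  then have "a \<le> t" "t \<le> b" "c \<le> t" "t \<le> d" by auto
  then show "a \<le> d \<and> c \<le> b" by linarith
next
  assume h: "a \<le> d \<and> c \<le> b" and "a \<le> b" "c \<le> d"
  then have "max a c \<in> {a..b} \<inter> {c..d}" by (auto simp: max_def)
  then show "{a..b} \<inter> {c..d} \<noteq> {}" by blast
qed

lemma rep_adj: "interval_rep S E lo hi \<Longrightarrow> x \<in> S \<Longrightarrow> y \<in> S \<Longrightarrow> x \<noteq> y \<Longrightarrow>
   E x y = (lo x \<le> hi y \<and> lo y \<le> hi x)"
proof -
  assume r: "interval_rep S E lo hi" and xy: "x \<in> S" "y \<in> S" "x \<noteq> y"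
  then have "E x y = ({lo x..hi x} \<inter> {lo y..hi y} \<noteq> {})" "lo x \<le> hi x" "lo y \<le> hi y"
    unfolding interval_rep_def by auto
  then show ?thesis using ivl_meet by simp
qed



lemma take_sorted_le:
  fixes xs zs :: "nat list"
  shows "sorted xs \<Longrightarrow> mset zs \<subseteq># mset xs \<Longrightarrow> k \<le> length zs \<Longrightarrow> sum_list (take k xs) \<le> sum_list zs"
proof (induction xs arbitrary: zs k)
  case Nil then show ?case by simp
next
  case (Cons a ys)
  show ?case
  proof (cases k)
    case 0 then show ?thesis by simp
  next
    case (Suc k')
    show ?thesis
    proof (cases "a \<in> set zs")
      case True
      let ?zs = "remove1 a zs"
      have e: "mset zs = add_mset a (mset ?zs)" using True by (simp add: insert_DiffM)
      have m: "mset ?zs \<subseteq># mset ys" using Cons.prems(2) unfolding e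
        by (simp add: mset_subset_eq_add_mset_cancel)
      have "sum_list (take k' ys) \<le> sum_list ?zs"
        using Cons.IH[OF _ m] Cons.prems Suc True by (simp add: length_remove1)
      moreover have "sum_list zs = a + sum_list ?zs"
        by (metis e sum_mset.add_mset sum_mset_sum_list)
      ultimately show ?thesis using Suc by simp
    next
      case False
      then obtain b zs' where zs: "zs = b # zs'" using Cons.prems Suc by (cases zs) auto
      have m0: "mset zs \<subseteq># mset ys"
        unfolding subseteq_mset_def
      proof
        fix x
        have "count (mset zs) x \<le> count (add_mset a (mset ys)) x"
          using Cons.prems(2) by (simp only: mset.simps(2) mset_subset_eq_count)
        then show "count (mset zs) x \<le> count (mset ys) x"
        proof (cases "x = a")
          case True
          have c0: "count (mset zs) a = 0" using \<open>a \<notin> set zs\<close> by (simp add: not_in_iff[symmetric])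
          show ?thesis unfolding True c0 by simp
        qed (use \<open>count (mset zs) x \<le> _\<close> in simp)
      qed
      have bset: "b \<in> set ys" using mset_subset_eq_insertD[of b "mset zs'" "mset ys"] m0 zs by simp
      have ab: "a \<le> b" using Cons.prems(1) bset by simp
      have m: "mset zs' \<subseteq># mset ys" using mset_subset_eq_insertD[of b "mset zs'" "mset ys"] m0 zs
        by (simp add: subset_mset.less_imp_le)
      have "sum_list (take k' ys) \<le> sum_list zs'"
        using Cons.IH[OF _ m] Cons.prems Suc zs by simp
      then show ?thesis using Suc zs ab by simp
    qed
  qed
qed



lemma wt_bound:
  assumes "finite NE" "A \<subseteq> NE" "k \<le> card A"
  shows "sum_list (take k (sorted_list_of_multiset (image_mset card (mset_set NE)))) \<le> (\<Sum>C\<in>A. card C)"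
proof -
  let ?X = "image_mset card (mset_set NE)"
  let ?Y = "image_mset card (mset_set A)"
  have sub: "?Y \<subseteq># ?X" using assms by (intro image_mset_subseteq_mono) (rule subset_imp_msubset_mset_set)
  obtain zs where zs: "mset zs = ?Y" using ex_mset by blast
  have "sum_list (take k (sorted_list_of_multiset ?X)) \<le> sum_list zs"
    apply (rule take_sorted_le)
    using sub zs assms by (auto simp: size_mset[symmetric] simp del: size_mset)
  also have "sum_list zs = (\<Sum>C\<in>A. card C)"
    by (metis sum_mset_sum_list zs sum_unfold_sum_mset)
  finally show ?thesis .
qed



lemma count_core:
  fixes NE B :: "'a set set" and K :: "'a set \<Rightarrow> bool"
  assumes finNE: "finite NE" and finC: "\<forall>C\<in>NE. finite C"
    and disj: "\<forall>C\<in>NE. \<forall>C'\<in>NE. C \<noteq> C' \<longrightarrow> C \<inter> C' = {}"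
    and pos: "\<forall>C\<in>NE. 1 \<le> card C"
    and P1: "\<forall>A\<subseteq>NE. n \<le> card A + 2 \<longrightarrow> p \<le> (\<Sum>C\<in>A. card C)"
    and DNE: "D \<in> NE" and vD: "v \<in> D" and cD: "card D = M" and maxM: "\<forall>C\<in>NE. card C \<le> M"
    and BNE: "B \<subseteq> NE"
    and big: "n \<le> card (NE - B) + 2"
    and finQ: "finite Q"
    and Qsub: "\<forall>C\<in>NE - B. C - {v} \<subseteq> Q"
    and bonus: "\<forall>C\<in>B. C \<noteq> D \<longrightarrow> card (NE - B) + 2 = n \<longrightarrow> \<not> K C \<longrightarrow> C \<inter> Q \<noteq> {}"
    and lt: "card Q < p"
  shows "D \<notin> B \<and> card (NE - B) + 2 = n \<and> (\<forall>C\<in>B. card C = M \<and> K C)"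
proof -
  define A where "A = NE - B"
  have finA: "finite A" using finNE A_def by simp
  have pw: "pairwise disjnt A" using disj unfolding A_def pairwise_def disjnt_def by blast
  have cU: "card (\<Union>A) = (\<Sum>C\<in>A. card C)"
    by (rule card_Union_disjoint[OF pw]) (use finC A_def in auto)
  have finU: "finite (\<Union>A)" using finA finC A_def by auto
  have pA: "p \<le> (\<Sum>C\<in>A. card C)" using P1[rule_format, of A] big A_def by simp
  have DB: "D \<notin> B"
  proof
    assume "D \<in> B"
    have "\<Union>A \<subseteq> Q"
    proof
      fix w assume "w \<in> \<Union>A"
      then obtain C where C: "C \<in> A" "w \<in> C" by blast
      have "C \<noteq> D" using C \<open>D \<in> B\<close> A_def by auto
      moreover have "C \<in> NE" using C A_def by simp
      ultimately have "C \<inter> D = {}" using disj DNE by blast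
      then have "w \<noteq> v" using C(2) vD by blast
      then show "w \<in> Q" using Qsub C A_def by blast
    qed
    then have "card (\<Union>A) \<le> card Q" using finQ by (simp add: card_mono)
    then show False using cU pA lt by simp
  qed
  have DA: "D \<in> A" using DB DNE A_def by simp
  have vU: "v \<in> \<Union>A" using DA vD by blast
  have UQ: "\<Union>A - {v} \<subseteq> Q" using Qsub A_def by blast
  have cUv: "card (\<Union>A - {v}) = (\<Sum>C\<in>A. card C) - 1" using cU vU by simp
  have sA: "(\<Sum>C\<in>A. card C) = M + (\<Sum>C\<in>A - {D}. card C)"
    using sum.remove[OF finA DA, of card] cD by simp
  have M1: "1 \<le> M" using pos DNE cD by auto
  have QU: "(\<Sum>C\<in>A. card C) - 1 \<le> card Q"
    using card_mono[OF finQ UQ] cUv by simp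
  have tight: "card A + 2 = n"
  proof (rule ccontr)
    assume "card A + 2 \<noteq> n"
    moreover have "card A = Suc (card (A - {D}))" using card.remove[OF finA DA] .
    moreover have "n \<le> card A + 2" using big A_def by simp
    ultimately have "n \<le> card (A - {D}) + 2" by linarith
    moreover have "A - {D} \<subseteq> NE" using A_def by auto
    ultimately have "p \<le> (\<Sum>C\<in>A - {D}. card C)" using P1 by blast
    then show False using sA QU lt M1 by linarith
  qed
  have allB: "\<forall>C\<in>B. card C = M \<and> K C"
  proof
    fix C assume CB: "C \<in> B"
    have CNE: "C \<in> NE" using CB BNE by blast
    have CA: "C \<notin> A" using CB A_def by simp
    have CD: "C \<noteq> D" using CB DB by blast
    show "card C = M \<and> K C"
    proof (rule ccontr)
      assume nk: "\<not> (card C = M \<and> K C)"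
      show False
      proof (cases "card C = M")
        case False
        then have lt2: "card C < M" using maxM CNE by force
        let ?A' = "insert C (A - {D})"
        have "?A' \<subseteq> NE" using CNE A_def by auto
        moreover have "card ?A' = card A"
          using CA finA card.remove[OF finA DA] card_insert_disjoint[of "A - {D}" C] by simp
        ultimately have "p \<le> (\<Sum>C\<in>?A'. card C)" using P1[rule_format, of ?A'] tight by simp
        also have "(\<Sum>C\<in>?A'. card C) = card C + (\<Sum>C\<in>A - {D}. card C)"
          using CA finA by (simp add: sum.insert)
        finally show False using sA QU lt lt2 by linarith
      next
        case True
        then have "\<not> K C" using nk by simp
        then have "C \<inter> Q \<noteq> {}" using bonus CB CD tight A_def by simp
        then obtain w where w: "w \<in> C" "w \<in> Q" by blast
        have "w \<notin> \<Union>A"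
        proof
          assume "w \<in> \<Union>A"
          then obtain C' where "C' \<in> A" "w \<in> C'" by blast
          moreover have "C' \<noteq> C" using \<open>C' \<in> A\<close> CA by blast
          moreover have "C' \<in> NE" using \<open>C' \<in> A\<close> A_def by simp
          ultimately show False using disj CNE w(1) by blast
        qed
        then have "insert w (\<Union>A - {v}) \<subseteq> Q" using w UQ by blast
        then have "card (insert w (\<Union>A - {v})) \<le> card Q" using finQ by (simp add: card_mono)
        moreover have "card (insert w (\<Union>A - {v})) = card (\<Union>A - {v}) + 1"
          using \<open>w \<notin> \<Union>A\<close> finU by simp
        ultimately show False using cUv pA lt M1 sA by linarith
      qed
    qed
  qed
  show ?thesis using DB tight allB A_def by simp
qed



lemma ivl_bonus:
  fixes lx hx ly hy lz hz :: real
  assumes "lx \<le> hx" "ly \<le> hy" "\<not> (lx \<le> hy \<and> ly \<le> hx)" "lz \<le> hx" "lx \<le> hz" "lz \<le> hy" "ly \<le> hz"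
    "(lz \<le> lx \<and> lz \<le> ly) \<or> (hx \<le> hz \<and> hy \<le> hz)"
  shows "(lz \<le> lx \<and> hx \<le> hz) \<or> (lz \<le> ly \<and> hy \<le> hz)"
proof (cases "hx < ly")
  case True
  show ?thesis
  proof (cases "lz \<le> lx \<and> lz \<le> ly")
    case True
    then show ?thesis using \<open>hx < ly\<close> assms(7) by auto
  next
    case False
    then have "hx \<le> hz \<and> hy \<le> hz" using assms(8) by blast
    then show ?thesis using \<open>hx < ly\<close> assms(4) by auto
  qed
next
  case False
  then have hy: "hy < lx" using assms(3) by linarith
  show ?thesis
  proof (cases "lz \<le> lx \<and> lz \<le> ly")
    case True
    then show ?thesis using hy assms(5) by auto
  next
    case False
    then have "hx \<le> hz \<and> hy \<le> hz" using assms(8) by blast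
    then show ?thesis using hy assms(6) by auto
  qed
qed

locale crit =
  fixes V :: "'a set" and E :: "'a \<Rightarrow> 'a \<Rightarrow> bool" and z :: 'a and p :: nat
  assumes sg: "simple_graph V E" and zV: "z \<in> V" and pdef: "p = wt_at V E z"
    and ppos: "1 \<le> p"
    and remv: "\<And>v. v \<in> V \<Longrightarrow> v \<noteq> z \<Longrightarrow> \<exists>lo hi. interval_rep (V - {v}) E lo hi \<and>
        card {w \<in> V - {v} - {z}. {lo w..hi w} \<subseteq> {lo z..hi z}} < p"
begin

abbreviation "LC \<equiv> local_components V E z"
abbreviation "NE \<equiv> {C \<in> LC. \<not> exterior E z C}"
abbreviation "n \<equiv> card LC"

lemma finV: "finite V" using sg unfolding simple_graph_def by (rule conjunct1)

lemma symall: "\<forall>u\<in>V. \<forall>v\<in>V. E u v \<longleftrightarrow> E v u"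
  using sg unfolding simple_graph_def by (rule conjunct1[OF conjunct2])

lemma symV: "u \<in> V \<Longrightarrow> w \<in> V \<Longrightarrow> E u w \<Longrightarrow> E w u"
proof -
  assume u: "u \<in> V" and w: "w \<in> V" and e: "E u w"
  have "E u w \<longleftrightarrow> E w u" using bspec[OF bspec[OF symall u] w] .
  then show "E w u" using e by simp
qed

lemma symZ: "symE (V - {z}) E" unfolding symE_def using symV by blast

lemma finLC: "finite LC" unfolding local_components_def using comp_finite finV by blast

lemma finNE: "finite NE" using finLC by simp

lemma LC_sub: "C \<in> LC \<Longrightarrow> C \<subseteq> V - {z}" unfolding local_components_def using comp_sub by blast

lemma LC_fin: "C \<in> LC \<Longrightarrow> finite C" using LC_sub finV finite_subset by blast

lemma LC_pos: "C \<in> LC \<Longrightarrow> 1 \<le> card C"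
proof -
  assume C: "C \<in> LC"
  then have "C \<noteq> {}" unfolding local_components_def by (rule comp_ne)
  then have "0 < card C" using LC_fin[OF C] by (simp add: card_gt_0_iff)
  then show "1 \<le> card C" by simp
qed

lemma LC_disj: "C \<in> LC \<Longrightarrow> C' \<in> LC \<Longrightarrow> C \<noteq> C' \<Longrightarrow> C \<inter> C' = {}"
  unfolding local_components_def using comp_disj[OF symZ] by blast

lemma LC_noedge: "C \<in> LC \<Longrightarrow> C' \<in> LC \<Longrightarrow> C \<noteq> C' \<Longrightarrow> x \<in> C \<Longrightarrow> y \<in> C' \<Longrightarrow> E x y \<Longrightarrow> False"
  unfolding local_components_def using comp_noedge[OF symZ] by blast

lemma NE_adj: "C \<in> NE \<Longrightarrow> w \<in> C \<Longrightarrow> E z w"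
  unfolding exterior_def by blast

lemma P1: "\<forall>A\<subseteq>NE. n \<le> card A + 2 \<longrightarrow> p \<le> (\<Sum>C\<in>A. card C)"
proof (intro allI impI)
  fix A assume A: "A \<subseteq> NE" "n \<le> card A + 2"
  have "p = sum_list (take (n - 2) (sorted_list_of_multiset (image_mset card (mset_set NE))))"
    unfolding pdef wt_at_def Let_def by simp
  also have "\<dots> \<le> (\<Sum>C\<in>A. card C)" using wt_bound[OF finNE A(1)] A(2) by simp
  finally show "p \<le> (\<Sum>C\<in>A. card C)" .
qed

definition Lc :: "('a \<Rightarrow> real) \<Rightarrow> ('a \<Rightarrow> real) \<Rightarrow> 'a \<Rightarrow> 'a set set" where
  "Lc lo hi v = {C\<in>NE. \<exists>w\<in>C - {v}. lo w < lo z}"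
definition Rc :: "('a \<Rightarrow> real) \<Rightarrow> ('a \<Rightarrow> real) \<Rightarrow> 'a \<Rightarrow> 'a set set" where
  "Rc lo hi v = {C\<in>NE. \<exists>w\<in>C - {v}. hi z < hi w}"
definition Qs :: "('a \<Rightarrow> real) \<Rightarrow> ('a \<Rightarrow> real) \<Rightarrow> 'a \<Rightarrow> 'a set" where
  "Qs lo hi v = {w \<in> V - {v} - {z}. {lo w..hi w} \<subseteq> {lo z..hi z}}"

context
  fixes lo hi v
  assumes rep: "interval_rep (V - {v}) E lo hi" and vz: "v \<noteq> z"
begin

lemma zS: "z \<in> V - {v}" using zV vz by simp

lemma adj: "x \<in> V - {v} \<Longrightarrow> y \<in> V - {v} \<Longrightarrow> x \<noteq> y \<Longrightarrow> E x y = (lo x \<le> hi y \<and> lo y \<le> hi x)"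
  using rep_adj[OF rep] by blast

lemma lohi: "x \<in> V - {v} \<Longrightarrow> lo x \<le> hi x" using rep unfolding interval_rep_def by blast

lemma zadj: "x \<in> V - {v} - {z} \<Longrightarrow> E z x \<Longrightarrow> lo z \<le> hi x \<and> lo x \<le> hi z"
  using adj[OF zS, of x] by auto

lemma left_cross:
  assumes "w \<in> V - {v} - {z}" "w' \<in> V - {v} - {z}" "w \<noteq> w'" "E z w" "E z w'"
    "lo w < lo z" "lo w' < lo z"
  shows "E w w'"
  using zadj[OF assms(1,4)] zadj[OF assms(2,5)] assms adj[of w w'] by auto

lemma right_cross:
  assumes "w \<in> V - {v} - {z}" "w' \<in> V - {v} - {z}" "w \<noteq> w'" "E z w" "E z w'"
    "hi z < hi w" "hi z < hi w'"
  shows "E w w'"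
  using zadj[OF assms(1,4)] zadj[OF assms(2,5)] assms adj[of w w'] by auto

lemma Lc_le1: "card (Lc lo hi v) \<le> 1"
proof -
  have "Lc lo hi v \<subseteq> NE" unfolding Lc_def by blast
  then have fin: "finite (Lc lo hi v)" using finNE finite_subset by blast
  have "\<forall>C1\<in>Lc lo hi v. \<forall>C2\<in>Lc lo hi v. C1 = C2"
  proof (intro ballI, rule ccontr)
    fix C1 C2 assume C: "C1 \<in> Lc lo hi v" "C2 \<in> Lc lo hi v" "C1 \<noteq> C2"
    obtain w1 where w1: "w1 \<in> C1 - {v}" "lo w1 < lo z" using C(1) unfolding Lc_def by blast
    obtain w2 where w2: "w2 \<in> C2 - {v}" "lo w2 < lo z" using C(2) unfolding Lc_def by blast
    have C1: "C1 \<in> NE" and C2: "C2 \<in> NE" using C unfolding Lc_def by auto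
    have "w1 \<noteq> w2" using LC_disj[of C1 C2] C1 C2 C(3) w1 w2 by blast
    moreover have "w1 \<in> V - {v} - {z}" "w2 \<in> V - {v} - {z}" using LC_sub C1 C2 w1 w2 by blast+
    ultimately have "E w1 w2" using left_cross NE_adj C1 C2 w1 w2 by blast
    then show False using LC_noedge[of C1 C2 w1 w2] C1 C2 C(3) w1 w2 by blast
  qed
  then show ?thesis using fin card_le_Suc0_iff_eq by (metis One_nat_def)
qed

lemma Rc_le1: "card (Rc lo hi v) \<le> 1"
proof -
  have "Rc lo hi v \<subseteq> NE" unfolding Rc_def by blast
  then have fin: "finite (Rc lo hi v)" using finNE finite_subset by blast
  have "\<forall>C1\<in>Rc lo hi v. \<forall>C2\<in>Rc lo hi v. C1 = C2"
  proof (intro ballI, rule ccontr)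
    fix C1 C2 assume C: "C1 \<in> Rc lo hi v" "C2 \<in> Rc lo hi v" "C1 \<noteq> C2"
    obtain w1 where w1: "w1 \<in> C1 - {v}" "hi z < hi w1" using C(1) unfolding Rc_def by blast
    obtain w2 where w2: "w2 \<in> C2 - {v}" "hi z < hi w2" using C(2) unfolding Rc_def by blast
    have C1: "C1 \<in> NE" and C2: "C2 \<in> NE" using C unfolding Rc_def by auto
    have "w1 \<noteq> w2" using LC_disj[of C1 C2] C1 C2 C(3) w1 w2 by blast
    moreover have "w1 \<in> V - {v} - {z}" "w2 \<in> V - {v} - {z}" using LC_sub C1 C2 w1 w2 by blast+
    ultimately have "E w1 w2" using right_cross NE_adj C1 C2 w1 w2 by blast
    then show False using LC_noedge[of C1 C2 w1 w2] C1 C2 C(3) w1 w2 by blast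
  qed
  then show ?thesis using fin card_le_Suc0_iff_eq by (metis One_nat_def)
qed

lemma Qsub: "C \<in> NE - (Lc lo hi v \<union> Rc lo hi v) \<Longrightarrow> C - {v} \<subseteq> Qs lo hi v"
proof
  fix w assume C: "C \<in> NE - (Lc lo hi v \<union> Rc lo hi v)" and w: "w \<in> C - {v}"
  have "\<not> lo w < lo z" "\<not> hi z < hi w" using C w unfolding Lc_def Rc_def by auto
  moreover have "w \<in> V - {v} - {z}" using C w LC_sub by blast
  ultimately show "w \<in> Qs lo hi v" unfolding Qs_def by auto
qed

lemma bonus:
  assumes C: "C \<in> NE" and vC: "v \<notin> C" and nc: "\<not> is_clique E C"
    and side: "C \<notin> Lc lo hi v \<or> C \<notin> Rc lo hi v"
  shows "C \<inter> Qs lo hi v \<noteq> {}"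
proof -
  obtain x y where xy: "x \<in> C" "y \<in> C" "x \<noteq> y" "\<not> E x y" using nc unfolding is_clique_def by blast
  have S: "x \<in> V - {v} - {z}" "y \<in> V - {v} - {z}" using xy C vC LC_sub by blast+
  have ex: "E z x" "E z y" using NE_adj C xy by blast+
  have s: "(lo z \<le> lo x \<and> lo z \<le> lo y) \<or> (hi x \<le> hi z \<and> hi y \<le> hi z)"
    using side C xy vC unfolding Lc_def Rc_def by force
  have "(lo z \<le> lo x \<and> hi x \<le> hi z) \<or> (lo z \<le> lo y \<and> hi y \<le> hi z)"
    apply (rule ivl_bonus[OF lohi lohi])
    using S xy(3,4) adj[of x y] zadj[OF S(1) ex(1)] zadj[OF S(2) ex(2)] s by auto
  then have "x \<in> Qs lo hi v \<or> y \<in> Qs lo hi v" using S unfolding Qs_def by auto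
  then show ?thesis using xy by blast
qed

end

end



context crit
begin

lemma Lc_sub: "Lc lo hi v \<subseteq> NE" unfolding Lc_def by blast
lemma Rc_sub: "Rc lo hi v \<subseteq> NE" unfolding Rc_def by blast
lemma Lc_fin: "finite (Lc lo hi v)" using finite_subset[OF Lc_sub finNE] .
lemma Rc_fin: "finite (Rc lo hi v)" using finite_subset[OF Rc_sub finNE] .

lemma Qs_fin: "finite (Qs lo hi v)" unfolding Qs_def using finV by simp

lemma step:
  assumes DNE: "D \<in> NE" and cD: "card D = M" and maxM: "\<forall>C\<in>NE. card C \<le> M" and vD: "v \<in> D"
    and hyp: "\<And>lo hi. interval_rep (V - {v}) E lo hi \<Longrightarrow>
      n \<le> card (NE - (Lc lo hi v \<union> Rc lo hi v)) + 2 \<and>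
      (card (NE - (Lc lo hi v \<union> Rc lo hi v)) + 2 = n \<longrightarrow>
        (\<forall>C\<in>Lc lo hi v \<union> Rc lo hi v. C \<notin> Lc lo hi v \<or> C \<notin> Rc lo hi v))"
  shows "\<exists>B\<subseteq>NE. D \<notin> B \<and> card (NE - B) + 2 = n \<and> (\<forall>C\<in>B. card C = M \<and> is_clique E C)"
proof -
  have DLC: "D \<in> LC" using DNE by simp
  have vV: "v \<in> V" "v \<noteq> z" using LC_sub[OF DLC] vD by auto
  obtain lo hi where rep: "interval_rep (V - {v}) E lo hi"
    and lt: "card {w \<in> V - {v} - {z}. {lo w..hi w} \<subseteq> {lo z..hi z}} < p"
    using remv[OF vV] by blast
  define B where "B = Lc lo hi v \<union> Rc lo hi v"
  have BNE: "B \<subseteq> NE" unfolding B_def Lc_def Rc_def by blast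
  have h: "n \<le> card (NE - B) + 2"
    "card (NE - B) + 2 = n \<Longrightarrow> \<forall>C\<in>B. C \<notin> Lc lo hi v \<or> C \<notin> Rc lo hi v"
    using hyp[OF rep] unfolding B_def by auto
  have bon: "\<forall>C\<in>B. C \<noteq> D \<longrightarrow> card (NE - B) + 2 = n \<longrightarrow> \<not> is_clique E C \<longrightarrow> C \<inter> Qs lo hi v \<noteq> {}"
  proof (intro ballI impI)
    fix C assume C: "C \<in> B" "C \<noteq> D" "card (NE - B) + 2 = n" "\<not> is_clique E C"
    have CNE: "C \<in> NE" using C BNE by blast
    have "C \<inter> D = {}" using LC_disj[of C D] CNE DNE C(2) by simp
    then have vC: "v \<notin> C" using vD by blast
    show "C \<inter> Qs lo hi v \<noteq> {}"
      using bonus[OF rep vV(2) CNE vC C(4)] h(2)[OF C(3)] C(1) by blast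
  qed
  have Qsub': "\<forall>C\<in>NE - B. C - {v} \<subseteq> Qs lo hi v" using Qsub[OF rep vV(2)] unfolding B_def by blast
  have lt': "card (Qs lo hi v) < p" using lt unfolding Qs_def .
  have "D \<notin> B \<and> card (NE - B) + 2 = n \<and> (\<forall>C\<in>B. card C = M \<and> is_clique E C)"
    apply (rule count_core[where K = "is_clique E" and Q = "Qs lo hi v" and v = v])
    using finNE LC_fin LC_disj LC_pos P1 DNE vD cD maxM BNE h(1) Qs_fin Qsub' bon lt'
    by auto
  then show ?thesis using BNE by blast
qed

lemma finish:
  assumes D0: "\<exists>D0\<in>NE. card D0 = Max (card ` LC)" and j: "card NE + 2 = n + j" "1 \<le> j"
    and hyp: "\<And>v lo hi. v \<in> \<Union>NE \<Longrightarrow> interval_rep (V - {v}) E lo hi \<Longrightarrow>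
      n \<le> card (NE - (Lc lo hi v \<union> Rc lo hi v)) + 2 \<and>
      (card (NE - (Lc lo hi v \<union> Rc lo hi v)) + 2 = n \<longrightarrow>
        (\<forall>C\<in>Lc lo hi v \<union> Rc lo hi v. C \<notin> Lc lo hi v \<or> C \<notin> Rc lo hi v))"
  shows "j + 1 \<le> card (max_clique_components V E z)"
proof -
  define M where "M = Max (card ` LC)"
  have maxM: "\<forall>C\<in>NE. card C \<le> M" unfolding M_def using finLC by simp
  define good where "good C \<longleftrightarrow> C \<in> NE \<and> card C = M \<and> is_clique E C" for C
  obtain D where DNE: "D \<in> NE" and cD: "card D = M" and ch: "(\<exists>C. good C) \<Longrightarrow> is_clique E D"
  proof (cases "\<exists>C. good C")
    case True
    then obtain C where "good C" by blast
    then show ?thesis using that unfolding good_def by blast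
  next
    case False
    then show ?thesis using that D0 unfolding M_def by blast
  qed
  obtain v where vD: "v \<in> D" using LC_pos[of D] DNE by fastforce
  have "\<exists>B\<subseteq>NE. D \<notin> B \<and> card (NE - B) + 2 = n \<and> (\<forall>C\<in>B. card C = M \<and> is_clique E C)"
    by (rule step[OF DNE cD maxM vD]) (use hyp DNE vD in blast)
  then obtain B where B: "B \<subseteq> NE" "D \<notin> B" "card (NE - B) + 2 = n" "\<forall>C\<in>B. card C = M \<and> is_clique E C"
    by blast
  have finB: "finite B" using B(1) finNE finite_subset by blast
  have cB: "card B = j" using card_Diff_subset[OF finB B(1)] card_mono[OF finNE B(1)] B(3) j(1) by linarith
  have BM: "B \<subseteq> max_clique_components V E z"
    using B(1,4) unfolding max_clique_components_def M_def by blast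
  have finMCC: "finite (max_clique_components V E z)"
    unfolding max_clique_components_def using finLC by simp
  show ?thesis
  proof (cases "is_clique E D")
    case True
    then have "insert D B \<subseteq> max_clique_components V E z"
      using BM DNE cD unfolding max_clique_components_def M_def by blast
    then have "card (insert D B) \<le> card (max_clique_components V E z)" using finMCC card_mono by blast
    then show ?thesis using card_insert_disjoint[OF finB B(2)] cB by simp
  next
    case False
    have "B \<noteq> {}" using cB j(2) by auto
    then obtain C where "C \<in> B" by blast
    then have "good C" using B(1,4) unfolding good_def by blast
    then show ?thesis using ch False by blast
  qed
qed

lemma LC_ne: "LC \<noteq> {}"
proof
  assume "LC = {}"
  then have "p = 0" unfolding pdef wt_at_def Let_def by simp
  then show False using ppos by simp
qed

lemma case_b:
  assumes noext: "{C \<in> LC. exterior E z C} = {}"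
  shows "3 \<le> card (max_clique_components V E z)"
proof -
  have NEeq: "NE = LC" using noext by blast
  have D0: "\<exists>D0\<in>NE. card D0 = Max (card ` LC)"
  proof -
    have "Max (card ` LC) \<in> card ` LC" using Max_in[of "card ` LC"] finLC LC_ne by simp
    then show ?thesis using NEeq by force
  qed
  have "2 + 1 \<le> card (max_clique_components V E z)"
  proof (rule finish[OF D0])
    show "card NE + 2 = n + 2" using NEeq by simp
  next
    fix v lo hi assume v: "v \<in> \<Union>NE" and rep: "interval_rep (V - {v}) E lo hi"
    have vz: "v \<noteq> z" using v LC_sub by blast
    define B where "B = Lc lo hi v \<union> Rc lo hi v"
    have fL: "finite (Lc lo hi v)" and fR: "finite (Rc lo hi v)" using Lc_fin Rc_fin .
    have cL: "card (Lc lo hi v) \<le> 1" using Lc_le1[OF rep vz] .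
    have cR: "card (Rc lo hi v) \<le> 1" using Rc_le1[OF rep vz] .
    have BNE: "B \<subseteq> NE" unfolding B_def Lc_def Rc_def by blast
    have finB: "finite B" using fL fR B_def by simp
    have cUI: "card B + card (Lc lo hi v \<inter> Rc lo hi v) = card (Lc lo hi v) + card (Rc lo hi v)"
      unfolding B_def using card_Un_Int[OF fL fR] by simp
    have cD: "card (NE - B) = card NE - card B" using card_Diff_subset[OF finB BNE] .
    have cBle: "card B \<le> card NE" using card_mono[OF finNE BNE] .
    have cNE: "card NE = n" using NEeq by simp
    have big: "n \<le> card (NE - B) + 2" using cD cBle cUI cL cR cNE by linarith
    have tight: "card (NE - B) + 2 = n \<Longrightarrow> \<forall>C\<in>B. C \<notin> Lc lo hi v \<or> C \<notin> Rc lo hi v"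
    proof -
      assume "card (NE - B) + 2 = n"
      then have "card B = 2" using cD cBle cNE by linarith
      then have "card (Lc lo hi v \<inter> Rc lo hi v) = 0" using cUI cL cR by linarith
      then have "Lc lo hi v \<inter> Rc lo hi v = {}" using fL by simp
      then show ?thesis by blast
    qed
    show "n \<le> card (NE - (Lc lo hi v \<union> Rc lo hi v)) + 2 \<and>
      (card (NE - (Lc lo hi v \<union> Rc lo hi v)) + 2 = n \<longrightarrow>
        (\<forall>C\<in>Lc lo hi v \<union> Rc lo hi v. C \<notin> Lc lo hi v \<or> C \<notin> Rc lo hi v))"
      using big tight unfolding B_def by blast
  qed simp
  then show ?thesis by simp
qed

end


lemma comp_reach: "C \<in> components S E \<Longrightarrow> x \<in> C \<Longrightarrow> reach S E x y \<Longrightarrow> y \<in> S \<Longrightarrow> y \<in> C"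
proof -
  assume C: "C \<in> components S E" and x: "x \<in> C" and r: "reach S E x y" and y: "y \<in> S"
  obtain u0 where u0: "C = compo S E u0" using C unfolding components_eq by (rule imageE)
  have "reach S E u0 x" using x unfolding u0 compo_def by simp
  then have "reach S E u0 y" using r by (rule reach_trans)
  then show "y \<in> C" unfolding u0 compo_def using y by simp
qed

context crit
begin

context
  fixes X
  assumes extX: "{C \<in> LC. exterior E z C} = {X}" and conn: "connected_graph V E"
begin

lemma extiff: "(C \<in> LC \<and> exterior E z C) = (C = X)"
proof -
  have "(C \<in> {C \<in> LC. exterior E z C}) = (C \<in> {X})" using extX by (rule arg_cong)
  then show ?thesis by simp
qed

lemma XLC: "X \<in> LC" and Xext: "exterior E z X" using extiff[of X] by simp_all

lemma NE_eq: "NE = LC - {X}"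
proof (rule set_eqI)
  fix C show "(C \<in> NE) = (C \<in> LC - {X})" using extiff[of C] by blast
qed

lemma cNE: "card NE + 1 = n"
proof -
  have "card LC = Suc (card (LC - {X}))" using card.remove[OF finLC XLC] .
  then show ?thesis using NE_eq by simp
qed

lemma NE_LC: "C \<in> NE \<Longrightarrow> C \<in> LC \<and> C \<noteq> X"
  using NE_eq by simp

lemma NE_notX: "C \<in> NE \<Longrightarrow> C \<inter> X = {}"
proof -
  assume "C \<in> NE"
  then have "C \<in> LC" "C \<noteq> X" using NE_eq by auto
  then show ?thesis using LC_disj XLC by blast
qed

lemma xu: "\<exists>x u. x \<in> X \<and> u \<in> X \<and> \<not> E z x \<and> E z u \<and> E x u"
proof -
  obtain x0 where x0: "x0 \<in> X" "\<not> E z x0" using Xext unfolding exterior_def by (elim bexE)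
  have XS: "X \<subseteq> V - {z}" using LC_sub[OF XLC] .
  have x0V: "x0 \<in> V" "x0 \<noteq> z" using x0(1) XS by auto
  have "\<forall>a\<in>V. \<forall>b\<in>V. reach V E a b" using conn unfolding connected_graph_def by (rule conjunct2)
  then have r: "reach V E x0 z" using x0V(1) zV by (elim ballE) auto
  define T where "T = {w. \<not> E z w \<and> w \<noteq> z}"
  have x0T: "x0 \<in> T" using x0 x0V unfolding T_def by simp
  have zT: "z \<notin> T" unfolding T_def by simp
  obtain c d where cd: "reach (V \<inter> T) E x0 c" "c \<in> V \<inter> T" "E c d" "d \<in> V" "d \<notin> T"
    using reach_exit[OF r x0T zT] by (elim exE conjE)
  have cT: "\<not> E z c" "c \<noteq> z" "c \<in> V" using cd(2) unfolding T_def by auto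
  have dz: "d \<noteq> z"
  proof
    assume "d = z"
    then have "E z c" using symV[of c z] cd(3) cT(3) zV by simp
    then show False using cT(1) by simp
  qed
  then have ezd: "E z d" using cd(5) unfolding T_def by simp
  have sub: "V \<inter> T \<subseteq> V - {z}" unfolding T_def by auto
  have "reach (V - {z}) E x0 c" using reach_mono[OF cd(1) sub] .
  moreover have "X \<in> components (V - {z}) E" using XLC unfolding local_components_def .
  ultimately have cX: "c \<in> X" using comp_reach[of X "V - {z}" E x0 c] x0(1) cT by simp
  have dX: "d \<in> X"
    using comp_closed[of X "V - {z}" E c d] XLC cX cd(3,4) dz unfolding local_components_def by simp
  show ?thesis by (rule exI[of _ c], rule exI[of _ d]) (use cX dX cT(1) ezd cd(3) in simp)
qed

lemma block:
  assumes x: "x \<in> X" "\<not> E z x" and u: "u \<in> X" "E z u" and exu: "E x u"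
    and vx: "v \<noteq> x" and vu: "v \<noteq> u" and vz: "v \<noteq> z" and rep: "interval_rep (V - {v}) E lo hi"
  shows "Lc lo hi v = {} \<or> Rc lo hi v = {}"
proof -
  have XS: "X \<subseteq> V - {z}" using LC_sub[OF XLC] .
  have xS: "x \<in> V - {v} - {z}" using x(1) XS vx by blast
  have uS: "u \<in> V - {v} - {z}" using u(1) XS vu by blast
  have xu: "x \<noteq> u" using x u by blast
  have zS: "z \<in> V - {v}" using zV vz by simp
  have "z \<noteq> x" using xS by blast
  then have "E z x = (lo z \<le> hi x \<and> lo x \<le> hi z)" using adj[OF rep vz zS, of x] xS by blast
  then have nzx: "\<not> (lo z \<le> hi x \<and> lo x \<le> hi z)" using x(2) by simp
  have "E x u = (lo x \<le> hi u \<and> lo u \<le> hi x)" using adj[OF rep vz, of x u] xS uS xu by blast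
  then have exu': "lo x \<le> hi u \<and> lo u \<le> hi x" using exu by simp
  have zu: "lo z \<le> hi u \<and> lo u \<le> hi z" using zadj[OF rep vz uS u(2)] .
  have lx: "lo x \<le> hi x" using lohi[OF rep vz] xS by blast
  have wfacts: "\<And>C w. C \<in> NE \<Longrightarrow> w \<in> C - {v} \<Longrightarrow> w \<in> V - {v} - {z} \<and> w \<noteq> u \<and> E z w \<and>
      lo z \<le> hi w \<and> lo w \<le> hi z \<and> \<not> E w u"
  proof -
    fix C w assume C: "C \<in> NE" and w: "w \<in> C - {v}"
    have wS: "w \<in> V - {v} - {z}" using C w LC_sub by blast
    have "w \<noteq> u" using NE_notX[OF C] w u by blast
    moreover have "E z w" using NE_adj C w by blast
    moreover have "\<not> E w u" using LC_noedge[of C X w u] NE_LC[OF C] XLC w u by blast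
    ultimately show "?thesis C w" using wS zadj[OF rep vz wS] by blast
  qed
  show ?thesis
  proof (cases "hi x < lo z")
    case True
    have "Lc lo hi v = {}"
    proof (rule ccontr)
      assume "Lc lo hi v \<noteq> {}"
      then obtain C w where C: "C \<in> NE" "w \<in> C - {v}" "lo w < lo z" unfolding Lc_def by blast
      note wf = wfacts[OF C(1,2)]
      have "E w u = (lo w \<le> hi u \<and> lo u \<le> hi w)" using adj[OF rep vz, of w u] wf uS by blast
      moreover have "lo w \<le> hi u \<and> lo u \<le> hi w" using wf C(3) True exu' zu by linarith
      ultimately have "E w u" by simp
      then show False using wf by blast
    qed
    then show ?thesis by blast
  next
    case False
    then have hz: "hi z < lo x" using nzx by linarith
    have "Rc lo hi v = {}"
    proof (rule ccontr)
      assume "Rc lo hi v \<noteq> {}"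
      then obtain C w where C: "C \<in> NE" "w \<in> C - {v}" "hi z < hi w" unfolding Rc_def by blast
      note wf = wfacts[OF C(1,2)]
      have "E w u = (lo w \<le> hi u \<and> lo u \<le> hi w)" using adj[OF rep vz, of w u] wf uS by blast
      moreover have "lo w \<le> hi u \<and> lo u \<le> hi w" using wf C(3) hz exu' zu by linarith
      ultimately have "E w u" by simp
      then show False using wf by blast
    qed
    then show ?thesis by blast
  qed
qed

end
end


context crit
begin

context
  fixes X
  assumes extX: "{C \<in> LC. exterior E z C} = {X}" and conn: "connected_graph V E"
begin

lemma X_big3:
  assumes x: "x \<in> X" "\<not> E z x" and u: "u \<in> X" "E z u" and exu: "E x u"
    and c3: "3 \<le> card X"
  shows False
proof -
  have XS: "X \<subseteq> V - {z}" using LC_sub[OF XLC[OF extX conn]] .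
  have finX: "finite X" using LC_fin[OF XLC[OF extX conn]] .
  have "card X - card {x, u} \<le> card (X - {x, u})" by (rule diff_card_le_card_Diff) simp
  moreover have "card {x, u} \<le> 2" by (simp add: card_insert_le_m1)
  ultimately have "1 \<le> card (X - {x, u})" using c3 by linarith
  then have "X - {x, u} \<noteq> {}" by (metis card.empty not_one_le_zero)
  then obtain v where v: "v \<in> X" "v \<noteq> x" "v \<noteq> u" by blast
  have vV: "v \<in> V" "v \<noteq> z" using v(1) XS by auto
  obtain lo hi where rep: "interval_rep (V - {v}) E lo hi"
    and lt: "card {w \<in> V - {v} - {z}. {lo w..hi w} \<subseteq> {lo z..hi z}} < p"
    using remv[OF vV] by blast
  have bl: "Lc lo hi v = {} \<or> Rc lo hi v = {}"
    by (rule block[OF extX conn x u exu v(2) v(3) vV(2) rep])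
  define B where "B = Lc lo hi v \<union> Rc lo hi v"
  have cB: "card B \<le> 1" using bl Lc_le1[OF rep vV(2)] Rc_le1[OF rep vV(2)] unfolding B_def by auto
  have BNE: "B \<subseteq> NE" unfolding B_def using Lc_sub Rc_sub by blast
  have finB: "finite B" using finite_subset[OF BNE finNE] .
  define A where "A = NE - B"
  have ANE: "A \<subseteq> NE" unfolding A_def by blast
  have cA: "card A = card NE - card B" unfolding A_def by (rule card_Diff_subset[OF finB BNE])
  have nA: "n \<le> card A + 2" using cA cB cNE[OF extX conn] card_mono[OF finNE BNE] by linarith
  have pA: "p \<le> (\<Sum>C\<in>A. card C)" using P1 ANE nA by blast
  have finA: "finite A" using finite_subset[OF ANE finNE] .
  have pw: "pairwise disjnt A"
    unfolding pairwise_def disjnt_def using LC_disj ANE by blast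
  have cU: "card (\<Union>A) = (\<Sum>C\<in>A. card C)"
    by (rule card_Union_disjoint[OF pw]) (use LC_fin ANE in blast)
  have UQ: "\<Union>A \<subseteq> Qs lo hi v"
  proof
    fix w assume "w \<in> \<Union>A"
    then obtain C where C: "C \<in> A" "w \<in> C" by blast
    have CNE: "C \<in> NE" using C(1) ANE by blast
    have "w \<noteq> v" using NE_notX[OF extX conn CNE] C(2) v(1) by blast
    moreover have "C \<in> NE - (Lc lo hi v \<union> Rc lo hi v)" using C(1) unfolding A_def B_def .
    ultimately show "w \<in> Qs lo hi v" using Qsub[OF rep vV(2)] C(2) by blast
  qed
  have "card (\<Union>A) \<le> card (Qs lo hi v)" using card_mono[OF Qs_fin UQ] .
  moreover have "card (Qs lo hi v) < p" using lt unfolding Qs_def .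
  ultimately show False using cU pA by linarith
qed

lemma X_small:
  assumes x: "x \<in> X" "\<not> E z x" and u: "u \<in> X" "E z u" and exu: "E x u"
    and c2: "card X \<le> 2" and sm: "\<forall>D\<in>NE. card D < card X"
  shows False
proof -
  have XS: "X \<subseteq> V - {z}" using LC_sub[OF XLC[OF extX conn]] .
  have finX: "finite X" using LC_fin[OF XLC[OF extX conn]] .
  have xu: "x \<noteq> u" using x(2) u(2) by blast
  have one: "\<And>D. D \<in> NE \<Longrightarrow> card D = 1"
  proof -
    fix D assume D: "D \<in> NE"
    have "card D < card X" using sm D by blast
    moreover have "1 \<le> card D" using LC_pos D by simp
    ultimately show "card D = 1" using c2 by linarith
  qed
  have xV: "x \<in> V" "x \<noteq> z" using x(1) XS by auto
  obtain lo hi where rep: "interval_rep (V - {x}) E lo hi"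
    and lt: "card {w \<in> V - {x} - {z}. {lo w..hi w} \<subseteq> {lo z..hi z}} < p"
    using remv[OF xV] by blast
  define W where "W = insert u (\<Union>NE)"
  have uNE: "u \<notin> \<Union>NE"
  proof
    assume "u \<in> \<Union>NE"
    then obtain C where "C \<in> NE" "u \<in> C" by blast
    then show False using NE_notX[OF extX conn, of C] u(1) by blast
  qed
  have finU: "finite (\<Union>NE)"
  proof (rule finite_Union[OF finNE])
    fix C assume "C \<in> NE" then show "finite C" using LC_fin by simp
  qed
  have finW: "finite W" unfolding W_def using finU by simp
  have Wf: "\<And>w. w \<in> W \<Longrightarrow> w \<in> V - {x} - {z} \<and> E z w"
  proof -
    fix w assume "w \<in> W"
    then consider "w = u" | C where "C \<in> NE" "w \<in> C" unfolding W_def by blast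
    then show "w \<in> V - {x} - {z} \<and> E z w"
    proof cases
      case 1 then show ?thesis using u XS xu by blast
    next
      case (2 C)
      have "w \<noteq> x" using NE_notX[OF extX conn 2(1)] 2(2) x(1) by blast
      then show ?thesis using 2 LC_sub[of C] NE_adj[of C w] by auto
    qed
  qed
  have key: "\<And>w1 w2. w1 \<in> W \<Longrightarrow> w2 \<in> W \<Longrightarrow> w1 \<noteq> w2 \<Longrightarrow> \<not> E w1 w2"
  proof
    fix w1 w2 assume w: "w1 \<in> W" "w2 \<in> W" "w1 \<noteq> w2" and e: "E w1 w2"
    have XLC': "X \<in> LC" using XLC[OF extX conn] .
    show False
    proof (cases "w1 = u")
      case True
      then have "w2 \<in> \<Union>NE" using w unfolding W_def by blast
      then obtain C2 where C2: "C2 \<in> NE" "w2 \<in> C2" by blast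
      show False using LC_noedge[of X C2 w1 w2] XLC' NE_LC[OF extX conn C2(1)] C2(2) True u(1) e by blast
    next
      case False
      then have "w1 \<in> \<Union>NE" using w unfolding W_def by blast
      then obtain C1 where C1: "C1 \<in> NE" "w1 \<in> C1" by blast
      show False
      proof (cases "w2 = u")
        case True
        show False using LC_noedge[of C1 X w1 w2] XLC' NE_LC[OF extX conn C1(1)] C1(2) True u(1) e by blast
      next
        case False
        then have "w2 \<in> \<Union>NE" using w unfolding W_def by blast
        then obtain C2 where C2: "C2 \<in> NE" "w2 \<in> C2" by blast
        show False
        proof (cases "C1 = C2")
          case True
          obtain a where "C1 = {a}" using one[OF C1(1)] by (rule card_1_singletonE)
          then show False using C1(2) C2(2) True w(3) by blast
        next
          case False
          then show False using LC_noedge[of C1 C2 w1 w2] C1 C2 e by simp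
        qed
      qed
    qed
  qed
  define Lw where "Lw = {w \<in> W. lo w < lo z}"
  define Rw where "Rw = {w \<in> W. hi z < hi w}"
  have cLw: "card Lw \<le> 1"
  proof -
    have "\<forall>w1\<in>Lw. \<forall>w2\<in>Lw. w1 = w2"
    proof (intro ballI, rule ccontr)
      fix w1 w2 assume w: "w1 \<in> Lw" "w2 \<in> Lw" "w1 \<noteq> w2"
      have "E w1 w2" using left_cross[OF rep xV(2), of w1 w2] Wf w unfolding Lw_def by blast
      then show False using key w unfolding Lw_def by blast
    qed
    moreover have "finite Lw" unfolding Lw_def using finW by simp
    ultimately show ?thesis using card_le_Suc0_iff_eq by (metis One_nat_def)
  qed
  have cRw: "card Rw \<le> 1"
  proof -
    have "\<forall>w1\<in>Rw. \<forall>w2\<in>Rw. w1 = w2"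
    proof (intro ballI, rule ccontr)
      fix w1 w2 assume w: "w1 \<in> Rw" "w2 \<in> Rw" "w1 \<noteq> w2"
      have "E w1 w2" using right_cross[OF rep xV(2), of w1 w2] Wf w unfolding Rw_def by blast
      then show False using key w unfolding Rw_def by blast
    qed
    moreover have "finite Rw" unfolding Rw_def using finW by simp
    ultimately show ?thesis using card_le_Suc0_iff_eq by (metis One_nat_def)
  qed
  have WQ: "W - (Lw \<union> Rw) \<subseteq> Qs lo hi x"
  proof
    fix w assume w: "w \<in> W - (Lw \<union> Rw)"
    then have "\<not> lo w < lo z" "\<not> hi z < hi w" "w \<in> W" unfolding Lw_def Rw_def by auto
    then show "w \<in> Qs lo hi x" using Wf unfolding Qs_def by auto
  qed
  have pw: "pairwise disjnt NE"
    unfolding pairwise_def disjnt_def using LC_disj by blast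
  have "card (\<Union>NE) = (\<Sum>C\<in>NE. card C)"
    by (rule card_Union_disjoint[OF pw]) (use LC_fin in blast)
  also have "\<dots> = (\<Sum>C\<in>NE. 1)" using one by (intro sum.cong) auto
  also have "\<dots> = card NE" by simp
  finally have cU: "card (\<Union>NE) = card NE" .
  have cW: "card W = n" unfolding W_def using cU uNE finU cNE[OF extX conn] by simp
  have "card W - card (Lw \<union> Rw) \<le> card (W - (Lw \<union> Rw))"
    by (rule diff_card_le_card_Diff) (simp add: Lw_def Rw_def finW)
  moreover have "card (Lw \<union> Rw) \<le> 2" using card_Un_le[of Lw Rw] cLw cRw by linarith
  moreover have "card (W - (Lw \<union> Rw)) \<le> card (Qs lo hi x)" using card_mono[OF Qs_fin WQ] .
  ultimately have q: "n - 2 \<le> card (Qs lo hi x)" using cW by linarith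
  have "n - 2 \<le> card NE" using cNE[OF extX conn] by linarith
  then obtain A where A: "A \<subseteq> NE" "card A = n - 2" "finite A" by (rule obtain_subset_with_card_n)
  have "p \<le> (\<Sum>C\<in>A. card C)" using P1 A by simp
  also have "\<dots> = (\<Sum>C\<in>A. 1)" using one A(1) by (intro sum.cong) auto
  also have "\<dots> = n - 2" using A by simp
  finally have "p \<le> n - 2" .
  moreover have "card (Qs lo hi x) < p" using lt unfolding Qs_def .
  ultimately show False using q by linarith
qed

lemma D0a: "\<exists>D0\<in>NE. card D0 = Max (card ` LC)"
proof -
  obtain x u where xu: "x \<in> X" "u \<in> X" "\<not> E z x" "E z u" "E x u" using xu[OF extX conn] by blast
  have key: "\<exists>D\<in>NE. card X \<le> card D"
  proof (rule ccontr)
    assume "\<not> (\<exists>D\<in>NE. card X \<le> card D)"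
    then have sm: "\<forall>D\<in>NE. card D < card X" by (meson not_le)
    show False
    proof (cases "3 \<le> card X")
      case True
      show False by (rule X_big3[OF xu(1,3) xu(2,4) xu(5) True])
    next
      case False
      show False by (rule X_small[OF xu(1,3) xu(2,4) xu(5) _ sm]) (use False in linarith)
    qed
  qed
  define M where "M = Max (card ` LC)"
  have "M \<in> card ` LC" unfolding M_def using Max_in[of "card ` LC"] finLC LC_ne by simp
  then obtain C0 where C0: "C0 \<in> LC" "card C0 = M" by blast
  show ?thesis
  proof (cases "C0 = X")
    case True
    obtain D where D: "D \<in> NE" "card X \<le> card D" using key by blast
    have "card D \<le> M" unfolding M_def using finLC D(1) by simp
    then have "card D = M" using D(2) C0(2) True by simp
    then show ?thesis using D(1) M_def by blast
  next
    case False
    then have "C0 \<in> NE" using NE_eq[OF extX conn] C0(1) by simp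
    then show ?thesis using C0(2) M_def by blast
  qed
qed

lemma case_a: "2 \<le> card (max_clique_components V E z)"
proof -
  obtain x u where xu: "x \<in> X" "u \<in> X" "\<not> E z x" "E z u" "E x u" using xu[OF extX conn] by blast
  have "1 + 1 \<le> card (max_clique_components V E z)"
  proof (rule finish[OF D0a])
    show "card NE + 2 = n + 1" using cNE[OF extX conn] by simp
  next
    fix v lo hi assume v: "v \<in> \<Union>NE" and rep: "interval_rep (V - {v}) E lo hi"
    obtain C where C: "C \<in> NE" "v \<in> C" using v by blast
    have vz: "v \<noteq> z" using C LC_sub by blast
    have vX: "v \<notin> X" using NE_notX[OF extX conn C(1)] C(2) by blast
    have bl: "Lc lo hi v = {} \<or> Rc lo hi v = {}"
      by (rule block[OF extX conn xu(1,3) xu(2,4) xu(5) _ _ vz rep]) (use vX xu in blast)+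
    define B where "B = Lc lo hi v \<union> Rc lo hi v"
    have cB: "card B \<le> 1" using bl Lc_le1[OF rep vz] Rc_le1[OF rep vz] unfolding B_def by auto
    have BNE: "B \<subseteq> NE" unfolding B_def using Lc_sub Rc_sub by blast
    have finB: "finite B" using finite_subset[OF BNE finNE] .
    have cD: "card (NE - B) = card NE - card B" by (rule card_Diff_subset[OF finB BNE])
    have big: "n \<le> card (NE - B) + 2" using cD cB cNE[OF extX conn] card_mono[OF finNE BNE] by linarith
    have os: "\<forall>C\<in>B. C \<notin> Lc lo hi v \<or> C \<notin> Rc lo hi v" using bl by blast
    show "n \<le> card (NE - (Lc lo hi v \<union> Rc lo hi v)) + 2 \<and>
      (card (NE - (Lc lo hi v \<union> Rc lo hi v)) + 2 = n \<longrightarrow>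
        (\<forall>C\<in>Lc lo hi v \<union> Rc lo hi v. C \<notin> Lc lo hi v \<or> C \<notin> Rc lo hi v))"
      using big os unfolding B_def by blast
  qed simp
  then show ?thesis by simp
qed

end
end


lemma rep_restrict: "interval_rep V E lo hi \<Longrightarrow> S \<subseteq> V \<Longrightarrow> interval_rep S E lo hi"
  unfolding interval_rep_def by blast

theorem theorem3p3:
  fixes V :: "'a set" and E :: "'a \<Rightarrow> 'a \<Rightarrow> bool" and p :: nat and z :: 'a
  assumes "interval_graph V E"
    and "connected_graph V E"
    and "balanced V E"
    and "p \<ge> 1"
    and "critical p V E"
    and "basepoint V E z"
  shows "(card {C \<in> local_components V E z. exterior E z C} \<le> 1 \<longrightarrow>
            card (max_clique_components V E z) \<ge> 2)
       \<and> (card {C \<in> local_components V E z. exterior E z C} = 0 \<longrightarrow>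
            card (max_clique_components V E z) \<ge> 3)"
proof -
  have sg: "simple_graph V E" using assms(1) unfolding interval_graph_def by (rule conjunct1)
  obtain lo0 hi0 where rep0: "interval_rep V E lo0 hi0"
    using assms(1) unfolding interval_graph_def by (elim conjE exE)
  have finV: "finite V" using sg unfolding simple_graph_def by (rule conjunct1)
  have pimp: "impropriety V E = p" and crit: "\<forall>S. S \<subset> V \<longrightarrow> impropriety S E < p"
    using assms(5) unfolding critical_def by auto
  have zV: "z \<in> V" and wz: "wt_at V E z = impropriety V E"
    using assms(6) unfolding basepoint_def by auto
  have remv: "\<exists>lo hi. interval_rep (V - {v}) E lo hi \<and>
        card {w \<in> V - {v} - {z}. {lo w..hi w} \<subseteq> {lo z..hi z}} < p"
    if v: "v \<in> V" "v \<noteq> z" for v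
  proof -
    define S where "S = V - {v}"
    have "S \<subset> V" using v S_def by blast
    then have lt: "impropriety S E < p" using crit by blast
    define R where "R = {imp_rep S lo hi | lo hi. interval_rep S E lo hi}"
    have "imp_rep S lo0 hi0 \<in> R" unfolding R_def using rep_restrict[OF rep0, of S] S_def by blast
    then have "R \<noteq> {}" by blast
    then have "Inf R \<in> R" by (rule Inf_nat_def1)
    then have "\<exists>lo hi. Inf R = imp_rep S lo hi \<and> interval_rep S E lo hi"
      unfolding R_def by (simp only: mem_Collect_eq)
    then obtain lo hi where eq0: "Inf R = imp_rep S lo hi" and rep: "interval_rep S E lo hi"
      by (elim exE conjE)
    have "impropriety S E = Inf R" unfolding R_def impropriety_def ..
    then have eq: "imp_rep S lo hi = impropriety S E" using eq0 by simp
    have zS: "z \<in> S" using zV v S_def by blast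
    have finS: "finite S" using finV S_def by simp
    have "imp_at S lo hi z \<le> imp_rep S lo hi"
      unfolding imp_rep_def using zS finS by (intro Max_ge) auto
    then have "imp_at S lo hi z < p" using eq lt by linarith
    then show ?thesis using rep unfolding imp_at_def S_def by blast
  qed
  interpret crit V E z p
  proof
    show "simple_graph V E" by (rule sg)
    show "z \<in> V" by (rule zV)
    show "p = wt_at V E z" using wz pimp by simp
    show "1 \<le> p" using assms(4) .
    show "\<And>v. v \<in> V \<Longrightarrow> v \<noteq> z \<Longrightarrow> \<exists>lo hi. interval_rep (V - {v}) E lo hi \<and>
        card {w \<in> V - {v} - {z}. {lo w..hi w} \<subseteq> {lo z..hi z}} < p" using remv by blast
  qed
  define ext where "ext = {C \<in> LC. exterior E z C}"
  have finext: "finite ext" unfolding ext_def using finLC by simp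
  have b: "card ext = 0 \<Longrightarrow> 3 \<le> card (max_clique_components V E z)"
  proof -
    assume "card ext = 0"
    then have "ext = {}" using finext by simp
    then show ?thesis using case_b unfolding ext_def by blast
  qed
  have a: "card ext \<le> 1 \<Longrightarrow> 2 \<le> card (max_clique_components V E z)"
  proof -
    assume c: "card ext \<le> 1"
    show ?thesis
    proof (cases "card ext = 0")
      case True then show ?thesis using b by simp
    next
      case False
      then have "card ext = 1" using c by simp
      then obtain X where "ext = {X}" by (rule card_1_singletonE)
      then show ?thesis using case_a[of X] assms(2) unfolding ext_def by blast
    qed
  qed
  show ?thesis using a b unfolding ext_def by blast
qed


end
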